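(* For every $\alpha\in(0,1]$ and every $P\in\mathcal{P}$, the set $P^\alpha$ is compact in $\mathcal{P}$ for the weak topology.
   Context: $\mathcal{P}$ denotes the set of all probability measures on $(\mathbb{R}^d,\mathcal{B}_d)$, $\mathcal{B}_d$ the Borel $\sigma$-algebra, endowed with the topology of weak convergence. For $P\in\mathcal{P}$ and $\alpha\in(0,1]$, the $\alpha$-trimming of $P$ is $P^\alpha=\{Q\in\mathcal{P} : Q(B)\le \alpha^{-1}P(B)\text{ for all } B\in\mathcal{B}_d\}$. *)

theory Defs
  imports "HOL-Probability.Probability"
begin

text \<open>The set of all probability measures on the Borel sets of a Euclidean space
  (R^d is modelled by a type of class euclidean_space).\<close>
definition prob_measures :: "'a::euclidean_space measure set" where
  "prob_measures = {M. sets M = sets borel \<and> prob_space M}"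

definition weak_topology :: "'a::euclidean_space measure topology" where
  "weak_topology = topology_generated_by
     {{Q \<in> prob_measures. (\<integral>x. f x \<partial>Q) \<in> U} | (f :: 'a \<Rightarrow> real) U.
        continuous_on UNIV f \<and> bounded (range f) \<and> open U}"

definition trimming :: "real \<Rightarrow> 'a::euclidean_space measure \<Rightarrow> 'a measure set" where
  "trimming \<alpha> P = {Q \<in> prob_measures. \<forall>B \<in> sets borel. measure Q B \<le> measure P B / \<alpha>}"

end

theory Submission imports Defs begin

lemma unif_limit_cont:
  fixes g :: "'b \<Rightarrow> real"
  assumes "\<And>n. continuous_map X euclidean (h n)"
    and "\<And>n x. x \<in> topspace X \<Longrightarrow> \<bar>h n x - g x\<bar> \<le> 1 / Suc n"
  shows "continuous_map X euclidean g"
proof -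
  have "continuous_map X Met_TC.mtopology g"
  proof (rule Met_TC.continuous_map_uniform_limit[where F=sequentially and f=h])
    show "\<forall>\<^sub>F n in sequentially. continuous_map X Met_TC.mtopology (h n)" using assms(1) by simp
    fix e::real assume "0<e"
    then obtain N where N: "1/Suc N < e" using nat_approx_posE by blast
    show "\<forall>\<^sub>F n in sequentially. \<forall>x\<in>topspace X. g x \<in> UNIV \<and> dist (h n x) (g x) < e"
      unfolding eventually_sequentially
    proof (intro exI[of _ N] allI impI ballI conjI)
      fix n x assume "N \<le> n" "x \<in> topspace X"
      have "1/Suc n \<le> 1/Suc N" by (simp add: frac_le \<open>N\<le>n\<close>)
      then show "dist (h n x) (g x) < e" using assms(2)[OF \<open>x \<in> topspace X\<close>, of n] N
        by (simp add: dist_real_def)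
    qed simp
  qed simp
  then show ?thesis by simp
qed

definition Kset :: "real \<Rightarrow> 'a::euclidean_space measure \<Rightarrow> ('a set \<Rightarrow> real) set" where
 "Kset \<alpha> P = {\<mu> \<in> PiE (sets borel) (\<lambda>B. {0 .. measure P B / \<alpha>}). \<mu> UNIV = 1 \<and>
     (\<forall>A\<in>sets borel. \<forall>B\<in>sets borel. A \<inter> B = {} \<longrightarrow> \<mu> (A \<union> B) = \<mu> A + \<mu> B)}"

definition Phi :: "('a::euclidean_space set \<Rightarrow> real) \<Rightarrow> 'a measure" where
 "Phi \<mu> = measure_of UNIV (sets borel) (\<lambda>B. ennreal (\<mu> B))"

lemma Phi_props:
  fixes P :: "'a::euclidean_space measure"
  assumes \<alpha>: "0<\<alpha>" and P: "P \<in> prob_measures" and \<mu>: "\<mu> \<in> Kset \<alpha> P"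
  shows "sets (Phi \<mu>) = sets borel" "\<And>B. B \<in> sets borel \<Longrightarrow> emeasure (Phi \<mu>) B = ennreal (\<mu> B)"
    "\<And>B. B \<in> sets borel \<Longrightarrow> measure (Phi \<mu>) B = \<mu> B" "Phi \<mu> \<in> prob_measures"
proof -
  interpret prob_space P using P by (simp add: prob_measures_def)
  have sP: "sets P = sets borel" using P by (simp add: prob_measures_def)
  interpret S: sigma_algebra UNIV "sets (borel::'a measure)" using sets.sigma_algebra_axioms[of borel] by simp
  have nn: "\<And>B. B \<in> sets borel \<Longrightarrow> 0 \<le> \<mu> B" and le: "\<And>B. B \<in> sets borel \<Longrightarrow> \<mu> B \<le> measure P B / \<alpha>"
    using \<mu> unfolding Kset_def PiE_def Pi_def by auto
  have add: "\<And>A B. A \<in> sets borel \<Longrightarrow> B \<in> sets borel \<Longrightarrow> A \<inter> B = {} \<Longrightarrow> \<mu> (A \<union> B) = \<mu> A + \<mu> B"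
    and one: "\<mu> UNIV = 1"
    using \<mu> unfolding Kset_def by auto
  have e0: "\<mu> {} = 0" using add[of "{}" "{}"] by simp
  have pos: "positive (sets borel) (\<lambda>B. ennreal (\<mu> B))" by (simp add: positive_def e0)
  have addi: "additive (sets borel) (\<lambda>B. ennreal (\<mu> B))"
    unfolding additive_def using add nn by (simp add: ennreal_plus)
  have ca: "countably_additive (sets borel) (\<lambda>B. ennreal (\<mu> B))"
  proof (rule S.empty_continuous_imp_countably_additive[OF pos addi])
    show "\<forall>A\<in>sets borel. ennreal (\<mu> A) \<noteq> \<infinity>" by simp
    fix A :: "nat \<Rightarrow> 'a set" assume A: "range A \<subseteq> sets borel" "decseq A" "(\<Inter>i. A i) = {}"
    have "(\<lambda>n. measure P (A n)) \<longlonglongrightarrow> measure P (\<Inter>i. A i)"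
      using A sP by (intro finite_Lim_measure_decseq) auto
    then have lim0: "(\<lambda>n. measure P (A n) / \<alpha>) \<longlonglongrightarrow> 0" using A(3)
      by (auto intro: tendsto_divide_zero)
    have "(\<lambda>n. \<mu> (A n)) \<longlonglongrightarrow> 0"
    proof (rule tendsto_sandwich[where f="\<lambda>_. 0" and h="\<lambda>n. measure P (A n) / \<alpha>"])
      show "\<forall>\<^sub>F n in sequentially. 0 \<le> \<mu> (A n)" using A nn by auto
      show "\<forall>\<^sub>F n in sequentially. \<mu> (A n) \<le> measure P (A n) / \<alpha>" using A le by auto
    qed (simp_all add: lim0)
    then show "(\<lambda>i. ennreal (\<mu> (A i))) \<longlonglongrightarrow> 0"
      using tendsto_ennrealI by fastforce
  qed
  show ss: "sets (Phi \<mu>) = sets borel" unfolding Phi_def by (simp add: sets_measure_of)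
  show em: "\<And>B. B \<in> sets borel \<Longrightarrow> emeasure (Phi \<mu>) B = ennreal (\<mu> B)"
    unfolding Phi_def by (rule emeasure_measure_of_sigma[OF S.sigma_algebra_axioms pos ca])
  show "\<And>B. B \<in> sets borel \<Longrightarrow> measure (Phi \<mu>) B = \<mu> B"
    using em nn by (simp add: measure_def)
  have sp: "space (Phi \<mu>) = UNIV" unfolding Phi_def by (simp add: space_measure_of_conv)
  have "prob_space (Phi \<mu>)" by (rule prob_spaceI) (simp add: sp em one)
  then show "Phi \<mu> \<in> prob_measures" using ss by (simp add: prob_measures_def)
qed


lemma trimming_in_image:
  fixes P :: "'a::euclidean_space measure"
  assumes \<alpha>: "0<\<alpha>" and P: "P \<in> prob_measures" and Q: "Q \<in> trimming \<alpha> P"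
  shows "restrict (measure Q) (sets borel) \<in> Kset \<alpha> P" "Phi (restrict (measure Q) (sets borel)) = Q"
proof -
  interpret Q: prob_space Q using Q by (simp add: trimming_def prob_measures_def)
  have sQ: "sets Q = sets borel" using Q by (simp add: trimming_def prob_measures_def)
  have spQ: "space Q = UNIV" using sets_eq_imp_space_eq[OF sQ] by simp
  have le: "\<And>B. B \<in> sets borel \<Longrightarrow> measure Q B \<le> measure P B / \<alpha>" using Q by (simp add: trimming_def)
  show K: "restrict (measure Q) (sets borel) \<in> Kset \<alpha> P"
    unfolding Kset_def
  proof (intro CollectI conjI ballI impI)
    show "restrict (measure Q) (sets borel) \<in> (\<Pi>\<^sub>E B\<in>sets borel. {0..measure P B / \<alpha>})"
      using le by auto
    show "restrict (measure Q) (sets borel) UNIV = 1" using Q.prob_space spQ by simp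
    fix A B :: "'a set" assume "A \<in> sets borel" "B \<in> sets borel" "A \<inter> B = {}"
    then show "restrict (measure Q) (sets borel) (A \<union> B) = restrict (measure Q) (sets borel) A + restrict (measure Q) (sets borel) B"
      using sQ by (simp add: Q.finite_measure_Union)
  qed
  show "Phi (restrict (measure Q) (sets borel)) = Q"
  proof (rule measure_eqI)
    show "sets (Phi (restrict (measure Q) (sets borel))) = sets Q" using Phi_props(1)[OF \<alpha> P K] sQ by simp
    fix B assume "B \<in> sets (Phi (restrict (measure Q) (sets borel)))"
    then have B: "B \<in> sets borel" using Phi_props(1)[OF \<alpha> P K] by simp
    show "emeasure (Phi (restrict (measure Q) (sets borel))) B = emeasure Q B"
      using Phi_props(2)[OF \<alpha> P K B] B sQ by (simp add: Q.emeasure_eq_measure)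
  qed
qed

lemma Kset_compact:
  fixes P :: "'a::euclidean_space measure"
  assumes \<alpha>: "0<\<alpha>"
  shows "compactin (product_topology (\<lambda>_. euclidean) (sets borel)) (Kset \<alpha> P)"
proof -
  let ?X = "product_topology (\<lambda>_. euclidean::real topology) (sets (borel::'a measure))"
  have c1: "compactin ?X (PiE (sets borel) (\<lambda>B. {0 .. measure P B / \<alpha>}))"
    by (simp add: compactin_PiE)
  have u: "UNIV \<in> sets (borel::'a measure)" by simp
  have cl1: "closedin ?X {\<mu> \<in> topspace ?X. \<mu> UNIV \<in> {1}}"
    by (rule closedin_continuous_map_preimage[OF continuous_map_product_projection[OF u]]) simp
  define D where "D = {(A,B). A \<in> sets (borel::'a measure) \<and> B \<in> sets (borel::'a measure) \<and> A \<inter> B = {}}"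
  define C where "C = (\<lambda>(A,B). {\<mu> \<in> topspace ?X. \<mu> (A \<union> B) - \<mu> A - \<mu> B \<in> {0}})"
  have clC: "closedin ?X (C d)" if "d \<in> D" for d
  proof -
    obtain A B where d: "d = (A,B)" "A \<in> sets borel" "B \<in> sets borel" using \<open>d\<in>D\<close> D_def by auto
    then have AB: "A \<union> B \<in> sets borel" by auto
    have "continuous_map ?X euclidean (\<lambda>\<mu>. \<mu> (A \<union> B) - \<mu> A - \<mu> B)"
      by (intro continuous_map_diff continuous_map_product_projection[of _ _ "\<lambda>_. euclidean", simplified] AB d)
    from closedin_continuous_map_preimage[OF this, of "{0}"]
    show ?thesis unfolding d C_def by simp
  qed
  have "D \<noteq> {}" unfolding D_def by auto
  then have cl2: "closedin ?X (\<Inter>(C ` D))" using clC by (intro closedin_Inter) auto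
  have eq: "Kset \<alpha> P = ({\<mu> \<in> topspace ?X. \<mu> UNIV \<in> {1}} \<inter> \<Inter>(C ` D)) \<inter> PiE (sets borel) (\<lambda>B. {0 .. measure P B / \<alpha>})"
    unfolding Kset_def C_def D_def by (auto simp: topspace_product_topology PiE_def Pi_def)
  show ?thesis unfolding eq
    by (intro closed_Int_compactin closedin_Int cl1 cl2 c1)
qed


lemma integral_approx:
  fixes P :: "'a::euclidean_space measure" and f :: "'a \<Rightarrow> real"
  assumes \<alpha>: "0<\<alpha>" and P: "P \<in> prob_measures" and \<mu>: "\<mu> \<in> Kset \<alpha> P"
    and f: "continuous_on UNIV f" and M: "\<And>x. \<bar>f x\<bar> \<le> M" and m: "0 < m"
    and N: "N = \<lceil>m*M\<rceil> + 1"
  shows "\<bar>(\<Sum>k\<in>{-N..N}. (of_int k / m) * \<mu> {x. \<lfloor>m * f x\<rfloor> = k}) - (\<integral>x. f x \<partial>Phi \<mu>)\<bar> \<le> 1/m"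
proof -
  let ?Q = "Phi \<mu>"
  interpret Q: prob_space ?Q using Phi_props(4)[OF \<alpha> P \<mu>] by (simp add: prob_measures_def)
  have sQ: "sets ?Q = sets borel" using Phi_props(1)[OF \<alpha> P \<mu>] .
  have spQ: "space ?Q = UNIV" using sets_eq_imp_space_eq[OF sQ] by simp
  have fm: "f \<in> borel_measurable borel" using f by (rule borel_measurable_continuous_onI)
  have fQ: "f \<in> borel_measurable ?Q" using fm measurable_cong_sets[OF sQ refl, of borel] by metis
  have Sm: "{x. \<lfloor>m * f x\<rfloor> = k} \<in> sets borel" for k
    using fm by measurable
  define s where "s x = (\<Sum>k\<in>{-N..N}. (of_int k / m) * indicator {x. \<lfloor>m * f x\<rfloor> = k} x)" for x
  have inN: "\<lfloor>m * f x\<rfloor> \<in> {-N..N}" for x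
  proof -
    have a1: "m * f x \<le> m * M" using M[of x] m
      by (auto simp: abs_le_iff mult_left_mono)
    have "m * (- f x) \<le> m * M" using M[of x] m
      by (intro mult_left_mono) auto
    then have a: "m * f x \<le> m * M" "- (m * M) \<le> m * f x" using a1 by auto
    have "\<lfloor>m * f x\<rfloor> \<le> \<lceil>m*M\<rceil>" using a(1)
      by (meson floor_le_ceiling floor_mono order.trans)
    moreover have "- \<lceil>m*M\<rceil> - 1 \<le> \<lfloor>m * f x\<rfloor>"
    proof -
      have "real_of_int (- \<lceil>m*M\<rceil>) \<le> - (m*M)" by simp
      then have "real_of_int (- \<lceil>m*M\<rceil>) - 1 < real_of_int \<lfloor>m * f x\<rfloor>" using a(2)
        by (smt (verit) real_of_int_floor_add_one_gt)
      then show ?thesis by linarith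
    qed
    ultimately show ?thesis using N by auto
  qed
  have s_eq: "s x = of_int \<lfloor>m * f x\<rfloor> / m" for x
  proof -
    have "s x = (\<Sum>k\<in>{-N..N}. if \<lfloor>m * f x\<rfloor> = k then of_int k / m else 0)"
      unfolding s_def by (intro sum.cong) (auto simp: indicator_def)
    also have "\<dots> = of_int \<lfloor>m * f x\<rfloor> / m" using inN[of x] by (simp add: sum.delta)
    finally show ?thesis .
  qed
  have intS: "integrable ?Q (indicator {x. \<lfloor>m * f x\<rfloor> = k} :: 'a \<Rightarrow> real)" for k
    using Sm[of k] sQ by (intro integrable_real_indicator) (auto simp: Q.emeasure_eq_measure)
  have int_s: "integrable ?Q s" unfolding s_def
    by (intro Bochner_Integration.integrable_sum integrable_mult_right intS)
  have isum: "(\<integral>x. s x \<partial>?Q) = (\<Sum>k\<in>{-N..N}. (of_int k / m) * \<mu> {x. \<lfloor>m * f x\<rfloor> = k})"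
    unfolding s_def using intS
    by (simp add: Bochner_Integration.integral_sum integral_mult_right spQ Phi_props(3)[OF \<alpha> P \<mu> Sm])
  have int_f: "integrable ?Q f"
    by (rule Q.integrable_const_bound[where B=M]) (use M fQ in auto)
  have d1: "0 \<le> f x - s x" "f x - s x \<le> 1/m" for x
  proof -
    have "of_int \<lfloor>m * f x\<rfloor> \<le> m * f x" "m * f x < of_int \<lfloor>m * f x\<rfloor> + 1" by linarith+
    moreover have e: "f x - s x = (m * f x - of_int \<lfloor>m * f x\<rfloor>) / m" using m
      by (simp add: s_eq field_simps)
    moreover have g: "m * f x - of_int \<lfloor>m * f x\<rfloor> \<le> 1" by linarith
    ultimately show "0 \<le> f x - s x" "f x - s x \<le> 1/m" using m unfolding e
      using divide_right_mono[OF g, of m] by auto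
  qed
  have "(\<integral>x. f x \<partial>?Q) - (\<integral>x. s x \<partial>?Q) = (\<integral>x. f x - s x \<partial>?Q)"
    using int_f int_s by simp
  moreover have "0 \<le> (\<integral>x. f x - s x \<partial>?Q)" using d1 by (intro Bochner_Integration.integral_nonneg) auto
  moreover have "(\<integral>x. f x - s x \<partial>?Q) \<le> (\<integral>x. 1/m \<partial>?Q)"
    using d1 int_f int_s by (intro integral_mono) auto
  moreover have "(\<integral>x. 1/m \<partial>?Q) = 1/m" using Q.prob_space by simp
  ultimately show ?thesis using isum by linarith
qed


lemma floor_set_borel:
  fixes f :: "'a::euclidean_space \<Rightarrow> real"
  assumes "continuous_on UNIV f"
  shows "{x. \<lfloor>m * f x\<rfloor> = k} \<in> sets borel"
proof -
  have fm: "f \<in> borel_measurable borel" using assms by (rule borel_measurable_continuous_onI)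
  then show ?thesis by measurable
qed

theorem lemma3:
  fixes P :: "'a::euclidean_space measure" and \<alpha> :: real
  assumes "0 < \<alpha>" and "\<alpha> \<le> 1" and "P \<in> prob_measures"
  shows "compactin weak_topology (trimming \<alpha> P)"
proof -
  note \<alpha> = assms(1) and P = assms(3)
  let ?X = "product_topology (\<lambda>_. euclidean::real topology) (sets (borel::'a measure))"
  let ?K = "Kset \<alpha> P"
  have KX: "?K \<subseteq> topspace ?X" using Kset_compact[OF \<alpha>, of P] compactin_subset_topspace by blast
  have cK: "compactin (subtopology ?X ?K) ?K" using Kset_compact[OF \<alpha>] by (simp add: compactin_subtopology)
  have tK: "topspace (subtopology ?X ?K) = ?K" using KX by auto
  have cont_int: "continuous_map (subtopology ?X ?K) euclidean (\<lambda>\<mu>. \<integral>x. f x \<partial>Phi \<mu>)"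
    if f: "continuous_on UNIV f" "bounded (range f)" for f :: "'a \<Rightarrow> real"
  proof -
    obtain M where M: "\<And>x. \<bar>f x\<bar> \<le> M" using f(2) by (auto simp: bounded_iff)
    define h where "h n \<mu> = (\<Sum>k\<in>{-(\<lceil>real (Suc n)*M\<rceil>+1)..\<lceil>real (Suc n)*M\<rceil>+1}.
         (of_int k / real (Suc n)) * \<mu> {x. \<lfloor>real (Suc n) * f x\<rfloor> = k})" for n \<mu>
    show ?thesis
    proof (rule unif_limit_cont[where h=h])
      fix n
      show "continuous_map (subtopology ?X ?K) euclidean (h n)"
        unfolding h_def
      proof (rule continuous_map_sum[OF finite_atLeastAtMost_int])
        fix k
        have "continuous_map ?X euclidean (\<lambda>\<mu>. \<mu> {x. \<lfloor>real (Suc n) * f x\<rfloor> = k})"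
          using continuous_map_product_projection[of "{x. \<lfloor>real (Suc n) * f x\<rfloor> = k}" "sets borel" "\<lambda>_. euclidean::real topology"]
            floor_set_borel[OF f(1)] by simp
        then have "continuous_map (subtopology ?X ?K) euclidean (\<lambda>\<mu>. \<mu> {x. \<lfloor>real (Suc n) * f x\<rfloor> = k})"
          by (rule continuous_map_from_subtopology)
        then show "continuous_map (subtopology ?X ?K) euclidean (\<lambda>\<mu>. of_int k / real (Suc n) * \<mu> {x. \<lfloor>real (Suc n) * f x\<rfloor> = k})"
          by (rule continuous_map_real_mult_left)
      qed
      fix \<mu> assume "\<mu> \<in> topspace (subtopology ?X ?K)"
      then have \<mu>: "\<mu> \<in> ?K" using tK by simp
      show "\<bar>h n \<mu> - (\<integral>x. f x \<partial>Phi \<mu>)\<bar> \<le> 1 / real (Suc n)"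
        unfolding h_def by (rule integral_approx[OF \<alpha> P \<mu> f(1) M]) auto
    qed
  qed
  have cm: "continuous_map (subtopology ?X ?K) weak_topology Phi"
    unfolding weak_topology_def
  proof (rule continuous_on_generated_topo)
    fix U assume "U \<in> {{Q \<in> prob_measures. (\<integral>x. f x \<partial>Q) \<in> U} | (f :: 'a \<Rightarrow> real) U.
        continuous_on UNIV f \<and> bounded (range f) \<and> open U}"
    then obtain f :: "'a \<Rightarrow> real" and V :: "real set" where U: "U = {Q\<in>prob_measures. (\<integral>x. f x \<partial>Q) \<in> V}"
      and f: "continuous_on UNIV f" "bounded (range f)" and V: "open V" by blast
    have "Phi -` U \<inter> topspace (subtopology ?X ?K) = {\<mu> \<in> topspace (subtopology ?X ?K). (\<integral>x. f x \<partial>Phi \<mu>) \<in> V}"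
      using tK Phi_props(4)[OF \<alpha> P] U by auto
    then show "openin (subtopology ?X ?K) (Phi -` U \<inter> topspace (subtopology ?X ?K))"
      using openin_continuous_map_preimage[OF cont_int[of f], of V] V f by simp
  next
    show "Phi ` topspace (subtopology ?X ?K) \<subseteq> \<Union> {{Q \<in> prob_measures. (\<integral>x. f x \<partial>Q) \<in> U} | (f :: 'a \<Rightarrow> real) U.
        continuous_on UNIV f \<and> bounded (range f) \<and> open U}"
    proof
      fix Q assume "Q \<in> Phi ` topspace (subtopology ?X ?K)"
      then have Q: "Q \<in> prob_measures" using tK Phi_props(4)[OF \<alpha> P] by auto
      show "Q \<in> \<Union> {{Q \<in> prob_measures. (\<integral>x. f x \<partial>Q) \<in> U} | (f :: 'a \<Rightarrow> real) U.
        continuous_on UNIV f \<and> bounded (range f) \<and> open U}"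
      proof (rule UnionI)
        show "{Q \<in> prob_measures. (\<integral>x. (\<lambda>_. 0::real) x \<partial>Q) \<in> (UNIV::real set)} \<in> {{Q \<in> prob_measures. (\<integral>x. f x \<partial>Q) \<in> U} | (f :: 'a \<Rightarrow> real) U.
          continuous_on UNIV f \<and> bounded (range f) \<and> open U}"
          by (rule CollectI, rule exI[of _ "\<lambda>_::'a. 0::real"], rule exI[of _ "UNIV::real set"]) simp
        show "Q \<in> {Q \<in> prob_measures. (\<integral>x. (\<lambda>_. 0::real) x \<partial>Q) \<in> (UNIV::real set)}" using Q by simp
      qed
    qed
  qed
  have "trimming \<alpha> P = Phi ` ?K"
  proof
    show "trimming \<alpha> P \<subseteq> Phi ` ?K"
      using trimming_in_image[OF \<alpha> P] by (metis image_eqI subsetI)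
    show "Phi ` ?K \<subseteq> trimming \<alpha> P"
    proof
      fix Q assume "Q \<in> Phi ` ?K"
      then obtain \<mu> where \<mu>: "\<mu> \<in> ?K" and Q: "Q = Phi \<mu>" by auto
      have le: "\<And>B. B \<in> sets borel \<Longrightarrow> \<mu> B \<le> measure P B / \<alpha>"
        using \<mu> unfolding Kset_def PiE_def Pi_def by auto
      show "Q \<in> trimming \<alpha> P" unfolding trimming_def Q
        using Phi_props(3,4)[OF \<alpha> P \<mu>] le by auto
    qed
  qed
  then show ?thesis using image_compactin[OF cK cm] tK by simp
qed

end
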